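(* Let $\alpha_1,\dots,\alpha_n\in\Gamma$ be linearly independent over $\mathbb{R}$, and let $A$ and $\mathcal{V}$ be the matrices defined in the context. Fix $i\neq j$ and an integer $p\ge3$. Suppose that either $\operatorname{len}(\alpha_j-\alpha_i)\ge p$, or both of the following hold: (Q) for all $k\notin\{i,j\}$, $$\langle\alpha_j,\alpha_i\rangle\langle\alpha_j-\alpha_k,\alpha_k-\alpha_i\rangle=\langle\alpha_j,\alpha_k\rangle\langle\alpha_k,\alpha_i\rangle;$$ (V) for every ordered pair $(\beta,\gamma)$ of nonzero elements of $\Gamma$ with $\beta+\gamma=\alpha_j-\alpha_i$ that is not of the form $(\alpha_j-\alpha_k,\alpha_k-\alpha_i)$ or $(\alpha_k-\alpha_i,\alpha_j-\alpha_k)$ for some $k\notin\{i,j\}$, one has $\langle\beta,\gamma\rangle f^\beta f^\gamma\in(\mathbf{s})^p$. Then the $(j,i)$ entry of the covariant derivative $d\mathcal{V}+A\mathcal{V}-\mathcal{V}A$ lies in $(\mathbf{s})^p$.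
   Context: Let $\Gamma\cong\mathbb{Z}^n$ be a lattice with basis $[S_1],\dots,[S_n]$, and let $\langle-,-\rangle:\Gamma\times\Gamma\to\mathbb{Z}$ be a skew-symmetric bilinear form. For $\alpha=\sum_i a_i[S_i]$ set $\operatorname{len}(\alpha)=\sum_i|a_i|$. Let $U\subset\operatorname{Hom}(\Gamma,\mathbb{C})$ be a connected open set; for $\alpha\in\Gamma$, $Z(\alpha)$ is a linear holomorphic function on $U$. Let $\mathbf{s}=(s_1,\dots,s_n)$ be formal variables, and let $R$ be the ring of formal power series in $\mathbf{s}$ with coefficients holomorphic on $U$. Differential forms with coefficients in $R$ are power series in $\mathbf{s}$ whose coefficients are holomorphic forms, and $d$ acts coefficientwise. $(\mathbf{s})^p$ denotes the series (or forms) all of whose monomials have total degree at least $p$. Let $\{f^\alpha\}_{\alpha\in\Gamma\setminus\{0\}}\subset R$ satisfy: (i) $f^\alpha\in(\mathbf{s})^{\operatorname{len}(\alpha)}$; (ii) if $f^\alpha\neq0$ then $Z(\alpha)$ is nowhere zero on $U$; (iii) the Joyce PDE $$df^\alpha=-\sum_{\beta+\gamma=\alpha,\ \beta,\gamma\neq0}(-1)^{\langle\beta,\gamma\rangle}\langle\beta,\gamma\rangle f^\beta f^\gamma\, d\log Z(\beta)$$ holds, summing over ordered pairs. Define the $n\times n$ matrices $A$ (of $1$-forms) and $\mathcal{V}$ (with entries in $R$) by $A_{kk}=\mathcal{V}_{kk}=0$ and, for $k\neq l$, $$\mathcal{V}_{kl}=(-1)^{\langle\alpha_k,\alpha_l\rangle}\langle\alpha_k,\alpha_l\rangle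 f^{\alpha_k-\alpha_l},\qquad A_{kl}=\mathcal{V}_{kl}\,d\log Z(\alpha_k-\alpha_l),$$ with $A_{kl}=0$ when $f^{\alpha_k-\alpha_l}=0$. *)

theory Defs
  imports "HOL-Analysis.Analysis" "HOL-Library.Function_Algebras"
begin

text \<open>The lattice \<Gamma> = Z^n is modelled as functions 'n \<Rightarrow> int (coordinates w.r.t. the basis [S_i],
  indexed by a finite type 'n with CARD('n) = n).
  Hom(\<Gamma>, C) is identified with complex^'n via z_i = z([S_i]); then Z(\<alpha>)(z) = \<Sum>_i \<alpha>_i z_i.
  The formal variables s_1..s_n are also indexed by 'n; a monomial is an exponent vector 'n \<Rightarrow> nat.
  An element of R (formal power series in s with coefficients holomorphic on U) is a map
  from monomials to coefficient functions complex^'n \<Rightarrow> complex (only their values on U matter).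
  A 1-form with coefficients in R is written \<Sum>_i g_i dz_i and is modelled by its components
  'n \<Rightarrow> series.\<close>

type_synonym 'n lat = "'n \<Rightarrow> int"
type_synonym 'n mono = "'n \<Rightarrow> nat"
type_synonym 'n ser = "'n mono \<Rightarrow> complex ^ 'n \<Rightarrow> complex"
type_synonym 'n form1 = "'n \<Rightarrow> 'n ser"

definition skew_bilinear :: "('n lat \<Rightarrow> 'n lat \<Rightarrow> int) \<Rightarrow> bool" where
  "skew_bilinear B \<longleftrightarrow>
     (\<forall>a b c. B (a + b) c = B a c + B b c) \<and>
     (\<forall>a b c. B a (b + c) = B a b + B a c) \<and>
     (\<forall>a b. B a b = - B b a)"

definition len :: "'n::finite lat \<Rightarrow> nat" where
  "len \<alpha> = (\<Sum>i\<in>UNIV. nat \<bar>\<alpha> i\<bar>)"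

definition deg :: "'n::finite mono \<Rightarrow> nat" where
  "deg m = (\<Sum>i\<in>UNIV. m i)"

definition Zc :: "'n::finite lat \<Rightarrow> complex ^ 'n \<Rightarrow> complex" where
  "Zc \<alpha> z = (\<Sum>i\<in>UNIV. of_int (\<alpha> i) * z $ i)"

definition lin_indep_R :: "('k::finite \<Rightarrow> 'n::finite lat) \<Rightarrow> bool" where
  "lin_indep_R a \<longleftrightarrow>
     (\<forall>c::'k \<Rightarrow> real. (\<forall>i. (\<Sum>k\<in>UNIV. c k * of_int (a k i)) = 0) \<longrightarrow> (\<forall>k. c k = 0))"

definition holo_on :: "(complex ^ 'n::finite) set \<Rightarrow> (complex ^ 'n \<Rightarrow> complex) \<Rightarrow> bool" where
  "holo_on U g \<longleftrightarrow>
     (\<forall>z\<in>U. \<exists>L. (g has_derivative L) (at z) \<and> (\<forall>c v. L (c *s v) = c * L v))"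

definition in_R :: "(complex ^ 'n::finite) set \<Rightarrow> 'n ser \<Rightarrow> bool" where
  "in_R U g \<longleftrightarrow> (\<forall>m. holo_on U (g m))"

definition ser_is_zero :: "(complex ^ 'n::finite) set \<Rightarrow> 'n ser \<Rightarrow> bool" where
  "ser_is_zero U g \<longleftrightarrow> (\<forall>m. \<forall>z\<in>U. g m z = 0)"

definition in_ideal :: "(complex ^ 'n::finite) set \<Rightarrow> nat \<Rightarrow> 'n ser \<Rightarrow> bool" where
  "in_ideal U p g \<longleftrightarrow> (\<forall>m. deg m < p \<longrightarrow> (\<forall>z\<in>U. g m z = 0))"

definition form_in_ideal :: "(complex ^ 'n::finite) set \<Rightarrow> nat \<Rightarrow> 'n form1 \<Rightarrow> bool" where
  "form_in_ideal U p \<omega> \<longleftrightarrow> (\<forall>i. in_ideal U p (\<omega> i))"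

definition ser_mult :: "'n::finite ser \<Rightarrow> 'n ser \<Rightarrow> 'n ser" where
  "ser_mult f g = (\<lambda>m z. \<Sum>a\<in>{a. \<forall>i. a i \<le> m i}. f a z * g (m - a) z)"

definition ser_scale :: "complex \<Rightarrow> 'n ser \<Rightarrow> 'n ser" where
  "ser_scale c g = (\<lambda>m z. c * g m z)"

definition dser :: "'n::finite ser \<Rightarrow> 'n form1" where
  "dser g = (\<lambda>i m z. frechet_derivative (g m) (at z) (axis i 1))"

text \<open>d log Z(\<beta>) = \<Sum>_i \<beta>_i dz_i / Z(\<beta>), as a 1-form with coefficients in R (constant in s).\<close>
definition dlogZ :: "'n::finite lat \<Rightarrow> 'n form1" where
  "dlogZ \<beta> = (\<lambda>i m z. if m = 0 then of_int (\<beta> i) / Zc \<beta> z else 0)"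

definition form_smult :: "'n::finite ser \<Rightarrow> 'n form1 \<Rightarrow> 'n form1" where
  "form_smult g \<omega> = (\<lambda>i. ser_mult g (\<omega> i))"

definition form_multr :: "'n::finite form1 \<Rightarrow> 'n ser \<Rightarrow> 'n form1" where
  "form_multr \<omega> g = (\<lambda>i. ser_mult (\<omega> i) g)"

definition form_add :: "'n form1 \<Rightarrow> 'n form1 \<Rightarrow> 'n form1" where
  "form_add \<omega> \<eta> = (\<lambda>i m z. \<omega> i m z + \<eta> i m z)"

definition form_sub :: "'n form1 \<Rightarrow> 'n form1 \<Rightarrow> 'n form1" where
  "form_sub \<omega> \<eta> = (\<lambda>i m z. \<omega> i m z - \<eta> i m z)"

definition form_sum :: "('k \<Rightarrow> 'n form1) \<Rightarrow> 'k set \<Rightarrow> 'n form1" where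
  "form_sum F K = (\<lambda>i m z. \<Sum>k\<in>K. F k i m z)"

definition sgnpow :: "int \<Rightarrow> complex" where
  "sgnpow k = (-1) powi k"

text \<open>The sum over ordered pairs (\<beta>, \<alpha>-\<beta>) is a formal sum of series; coefficientwise it is
  an (unconditional) sum of complex numbers, which by (i) has only finitely many nonzero terms.\<close>
definition joyce_pde ::
  "(complex ^ 'n::finite) set \<Rightarrow> ('n lat \<Rightarrow> 'n lat \<Rightarrow> int) \<Rightarrow> ('n lat \<Rightarrow> 'n ser) \<Rightarrow> bool" where
  "joyce_pde U B f \<longleftrightarrow>
     (\<forall>\<alpha>. \<alpha> \<noteq> 0 \<longrightarrow> (\<forall>i m. \<forall>z\<in>U.
        dser (f \<alpha>) i m z =
          - (\<Sum>\<^sub>\<infinity>\<beta>\<in>{\<beta>. \<beta> \<noteq> 0 \<and> \<alpha> - \<beta> \<noteq> 0}.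
               sgnpow (B \<beta> (\<alpha> - \<beta>)) * of_int (B \<beta> (\<alpha> - \<beta>))
                 * ser_mult (ser_mult (f \<beta>) (f (\<alpha> - \<beta>))) (dlogZ \<beta> i) m z)))"

definition Vmat ::
  "('n::finite lat \<Rightarrow> 'n lat \<Rightarrow> int) \<Rightarrow> ('n lat \<Rightarrow> 'n ser) \<Rightarrow> ('k \<Rightarrow> 'n lat) \<Rightarrow> 'k \<Rightarrow> 'k \<Rightarrow> 'n ser" where
  "Vmat B f a k l =
     (if k = l then (\<lambda>m z. 0)
      else ser_scale (sgnpow (B (a k) (a l)) * of_int (B (a k) (a l))) (f (a k - a l)))"

definition Amat ::
  "(complex ^ 'n::finite) set \<Rightarrow> ('n lat \<Rightarrow> 'n lat \<Rightarrow> int) \<Rightarrow> ('n lat \<Rightarrow> 'n ser) \<Rightarrow> ('k \<Rightarrow> 'n lat)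
     \<Rightarrow> 'k \<Rightarrow> 'k \<Rightarrow> 'n form1" where
  "Amat U B f a k l =
     (if k = l \<or> ser_is_zero U (f (a k - a l)) then (\<lambda>i m z. 0)
      else form_smult (Vmat B f a k l) (dlogZ (a k - a l)))"

definition covD ::
  "(complex ^ 'n::finite) set \<Rightarrow> ('n lat \<Rightarrow> 'n lat \<Rightarrow> int) \<Rightarrow> ('n lat \<Rightarrow> 'n ser) \<Rightarrow> ('k::finite \<Rightarrow> 'n lat)
     \<Rightarrow> 'k \<Rightarrow> 'k \<Rightarrow> 'n form1" where
  "covD U B f a j i =
     form_sub
       (form_add (dser (Vmat B f a j i))
                 (form_sum (\<lambda>k. form_multr (Amat U B f a j k) (Vmat B f a k i)) UNIV))
       (form_sum (\<lambda>k. form_smult (Vmat B f a j k) (Amat U B f a k i)) UNIV)"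

end

theory Submission
  imports Defs
begin

lemma sgnpow_add: "sgnpow (x + y) = sgnpow x * sgnpow y"
  unfolding sgnpow_def by (simp add: power_int_add)

lemma sgnpow_neg: "sgnpow (- x) = sgnpow x"
  unfolding sgnpow_def by (simp add: power_int_minus power_int_inverse[symmetric])

lemma finite_box: "finite {a::'n::finite \<Rightarrow> nat. \<forall>i. a i \<le> m i}"
proof -
  have "{a::'n \<Rightarrow> nat. \<forall>i. a i \<le> m i} = PiE UNIV (\<lambda>i. {..m i})"
    by (auto simp: PiE_def Pi_def extensional_def)
  then show ?thesis by (simp add: finite_PiE)
qed

lemma minus_eq0_iff: "(\<forall>i. x i \<le> m i) \<Longrightarrow> ((m::'n \<Rightarrow> nat) - x = 0) = (x = m)"
  by (auto simp: fun_eq_iff le_antisym)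

lemma ser_mult_dlog:
  "ser_mult g (dlogZ \<beta> r) m z = g m z * (of_int (\<beta> r) / Zc \<beta> z)"
proof -
  have "ser_mult g (dlogZ \<beta> r) m z =
     (\<Sum>x\<in>{a. \<forall>i. a i \<le> m i}. if x = m then g m z * (of_int (\<beta> r) / Zc \<beta> z) else 0)"
    unfolding ser_mult_def dlogZ_def
    by (rule sum.cong) (auto simp: minus_eq0_iff)
  also have "\<dots> = g m z * (of_int (\<beta> r) / Zc \<beta> z)"
    using finite_box[of m] by simp
  finally show ?thesis .
qed

lemma ser_mult_dlog_fun:
  "ser_mult g (dlogZ \<beta> r) = (\<lambda>m z. g m z * (of_int (\<beta> r) / Zc \<beta> z))"
  by (intro ext) (rule ser_mult_dlog)

lemma ser_mult_rmul: "ser_mult (\<lambda>m z. g m z * c z) h m z = c z * ser_mult g h m z"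
  unfolding ser_mult_def by (simp add: sum_distrib_left mult.commute mult.left_commute)

lemma ser_mult_lmul2: "ser_mult g (\<lambda>m z. h m z * c z) m z = c z * ser_mult g h m z"
  unfolding ser_mult_def by (simp add: sum_distrib_left mult.commute mult.left_commute)

lemma ser_mult_scale:
  "ser_mult (ser_scale c g) (ser_scale c' h) m z = c * c' * ser_mult g h m z"
  unfolding ser_mult_def ser_scale_def by (simp add: sum_distrib_left mult_ac)

lemma mm_a: "(\<forall>i. a i \<le> m i) \<Longrightarrow> (m::'n \<Rightarrow> nat) - (m - a) = a"
  by (auto simp: fun_eq_iff)

lemma ser_mult_comm: "ser_mult g h m z = ser_mult h g m z"
  unfolding ser_mult_def
  apply (rule sum.reindex_bij_witness[where i="\<lambda>a. m - a" and j="\<lambda>a. m - a"])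
  apply (auto simp: mm_a)
  done

lemma ser_mult_zero_l: "ser_is_zero U g \<Longrightarrow> z \<in> U \<Longrightarrow> ser_mult g h m z = 0"
  unfolding ser_mult_def ser_is_zero_def by simp

lemma ser_mult_zero_r: "ser_is_zero U g \<Longrightarrow> z \<in> U \<Longrightarrow> ser_mult h g m z = 0"
  unfolding ser_mult_def ser_is_zero_def by simp

lemma deg_split: "(\<forall>i. a i \<le> m i) \<Longrightarrow> deg a + deg (m - a) = deg m"
  unfolding deg_def by (simp add: sum.distrib[symmetric])

lemma ser_mult_ideal:
  assumes "in_ideal U P g" "in_ideal U Q h" "deg m < P + Q" "z \<in> U"
  shows "ser_mult g h m z = 0"
  unfolding ser_mult_def
proof (rule sum.neutral, safe)
  fix x assume x: "\<forall>i. x i \<le> m i"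
  have "deg x + deg (m - x) = deg m" using deg_split[OF x] .
  then have "deg x < P \<or> deg (m - x) < Q" using assms(3) by linarith
  then show "g x z * h (m - x) z = 0"
    using assms(1,2,4) unfolding in_ideal_def by auto
qed

lemma len_add: "len (x + y) \<le> len x + len (y::'n::finite lat)"
proof -
  have "(\<Sum>i\<in>UNIV. nat \<bar>(x + y) i\<bar>) \<le> (\<Sum>i\<in>UNIV. nat \<bar>x i\<bar> + nat \<bar>y i\<bar>)"
    by (rule sum_mono) (simp add: nat_add_distrib[symmetric] nat_mono abs_triangle_ineq)
  then show ?thesis unfolding len_def by (simp add: sum.distrib)
qed

lemma bil:
  assumes "skew_bilinear B"
  shows "B (x - y) w = B x w - B y w" "B w (x - y) = B w x - B w y" "B x x = 0"
proof -
  have A: "\<And>a b c. B (a + b) c = B a c + B b c" "\<And>a b c. B a (b + c) = B a b + B a c"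
    "\<And>a b. B a b = - B b a" using assms unfolding skew_bilinear_def by blast+
  have "B (x - y) w + B y w = B x w" using A(1)[of "x - y" y w] by simp
  then show "B (x - y) w = B x w - B y w" by simp
  have "B w (x - y) + B w y = B w x" using A(2)[of w "x - y" y] by simp
  then show "B w (x - y) = B w x - B w y" by simp
  show "B x x = 0" using A(3)[of x x] by simp
qed

lemma indep_int:
  assumes "lin_indep_R a" "\<And>x. (\<Sum>l\<in>UNIV. c l * a l x) = (0::int)"
  shows "c k = 0"
proof -
  have "\<forall>x. (\<Sum>l\<in>UNIV. real_of_int (c l) * of_int (a l x)) = 0"
  proof
    fix x
    have "(\<Sum>l\<in>UNIV. real_of_int (c l) * of_int (a l x)) = of_int (\<Sum>l\<in>UNIV. c l * a l x)"
      by simp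
    then show "(\<Sum>l\<in>UNIV. real_of_int (c l) * of_int (a l x)) = 0" using assms(2) by simp
  qed
  then show ?thesis using assms(1) unfolding lin_indep_R_def by fastforce
qed

lemma sum_ob: fixes v :: "'a::finite \<Rightarrow> int" shows "(\<Sum>t\<in>UNIV. of_bool (t = k) * (v t :: int)) = v k"
proof -
  have "(\<Sum>t\<in>UNIV. of_bool (t = k) * (v t :: int)) = (\<Sum>t\<in>UNIV. if t = k then v k else 0)"
    by (rule sum.cong) auto
  then show ?thesis using sum.delta[of UNIV k "\<lambda>_. v k"] by simp
qed

lemma indep1:
  assumes "lin_indep_R (a::'n::finite \<Rightarrow> 'm::finite lat)" "k \<noteq> l"
  shows "a k \<noteq> a l"
proof
  assume e: "a k = a l"
  have eq: "\<And>x. (\<Sum>t\<in>UNIV. (of_bool (t = k) - of_bool (t = l)) * a t x) = (0::int)"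
      using e by (simp add: left_diff_distrib sum_subtractf sum_ob del: of_bool_eq)
  have "(\<lambda>t. of_bool (t = k) - of_bool (t = l)) k = (0::int)"
    by (rule indep_int[OF assms(1) eq])
  then show False using assms(2) by simp
qed

lemma indep2:
  assumes "lin_indep_R (a::'n::finite \<Rightarrow> 'm::finite lat)" "k \<noteq> i" "k \<noteq> j" "k' \<noteq> i" "k' \<noteq> j" "i \<noteq> j"
  shows "a j - a k \<noteq> a k' - a i"
proof
  assume e: "a j - a k = a k' - a i"
  have eq: "(\<Sum>t\<in>UNIV. (of_bool (t = j) - of_bool (t = k) - of_bool (t = k') + of_bool (t = i)) * a t x) = (0::int)" for x
  proof -
    have ex: "a j x - a k x - a k' x + a i x = 0" using fun_cong[OF e, of x] by simp
    show ?thesis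
      using ex by (simp add: distrib_right left_diff_distrib sum_subtractf sum.distrib sum_ob del: of_bool_eq)
  qed
  have "(\<lambda>t. of_bool (t = j) - of_bool (t = k) - of_bool (t = k') + of_bool (t = i)) j = (0::int)"
    by (rule indep_int[OF assms(1) eq])
  then show False using assms by simp
qed

lemma fd_zero:
  assumes "open U" "z \<in> U" "\<forall>z\<in>U. g z = 0"
  shows "frechet_derivative g (at z) = (\<lambda>_. 0)"
proof -
  have "((\<lambda>_. 0) has_derivative (\<lambda>_. 0)) (at z)" by simp
  then have "(g has_derivative (\<lambda>_. 0)) (at z)"
    by (rule has_derivative_transform_within_open[OF _ assms(1,2)]) (use assms(3) in auto)
  then show ?thesis by (rule frechet_derivative_at[symmetric])
qed

lemma fd_scale:
  fixes g :: "complex^'n::finite \<Rightarrow> complex"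
  assumes "(g has_derivative L) (at z)"
  shows "frechet_derivative (\<lambda>z. c * g z) (at z) v = c * frechet_derivative g (at z) v"
proof -
  have "((\<lambda>z. c * g z) has_derivative (\<lambda>x. c * L x)) (at z)"
    by (rule has_derivative_mult_right[OF assms])
  then show ?thesis using frechet_derivative_at[OF assms] frechet_derivative_at by metis
qed

definition cV :: "('n::finite lat \<Rightarrow> 'n lat \<Rightarrow> int) \<Rightarrow> ('k \<Rightarrow> 'n lat) \<Rightarrow> 'k \<Rightarrow> 'k \<Rightarrow> complex" where
  "cV B a k l = sgnpow (B (a k) (a l)) * of_int (B (a k) (a l))"

definition dl :: "'n::finite lat \<Rightarrow> 'n \<Rightarrow> complex^'n \<Rightarrow> complex" where
  "dl \<beta> r z = of_int (\<beta> r) / Zc \<beta> z"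

lemma Vmat_ne: "k \<noteq> l \<Longrightarrow> Vmat B f a k l = ser_scale (cV B a k l) (f (a k - a l))"
  unfolding Vmat_def cV_def by simp

lemma AV_term:
  assumes "k \<noteq> i" "k \<noteq> j" "z \<in> U"
  shows "form_multr (Amat U B f a j k) (Vmat B f a k i) r m z =
    dl (a j - a k) r z * (cV B a j k * cV B a k i * ser_mult (f (a j - a k)) (f (a k - a i)) m z)"
proof (cases "ser_is_zero U (f (a j - a k))")
  case True
  then show ?thesis using assms ser_mult_zero_l[OF True assms(3)]
    by (simp add: form_multr_def Amat_def ser_mult_def)
next
  case False
  have "Amat U B f a j k r = (\<lambda>m z. Vmat B f a j k m z * dl (a j - a k) r z)"
    using False assms by (simp add: Amat_def form_smult_def ser_mult_dlog_fun dl_def)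
  then show ?thesis using assms
    by (simp add: form_multr_def ser_mult_rmul Vmat_ne ser_mult_scale)
qed

lemma VA_term:
  assumes "k \<noteq> i" "k \<noteq> j" "z \<in> U"
  shows "form_smult (Vmat B f a j k) (Amat U B f a k i) r m z =
    dl (a k - a i) r z * (cV B a j k * cV B a k i * ser_mult (f (a j - a k)) (f (a k - a i)) m z)"
proof (cases "ser_is_zero U (f (a k - a i))")
  case True
  then show ?thesis using assms ser_mult_zero_r[OF True assms(3)]
    by (simp add: form_smult_def Amat_def ser_mult_def)
next
  case False
  have "Amat U B f a k i r = (\<lambda>m z. Vmat B f a k i m z * dl (a k - a i) r z)"
    using False assms by (simp add: Amat_def form_smult_def ser_mult_dlog_fun dl_def)
  then show ?thesis using assms
    by (simp add: form_smult_def ser_mult_lmul2 Vmat_ne ser_mult_scale)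
qed

lemma covD_formula:
  assumes ij: "i \<noteq> j" and z: "z \<in> U"
    and der: "(f (a j - a i) m has_derivative L) (at z)"
  shows "covD U B f a j i r m z = cV B a j i * frechet_derivative (f (a j - a i) m) (at z) (axis r 1)
    + (\<Sum>k\<in>UNIV-{i,j}. (dl (a j - a k) r z - dl (a k - a i) r z) *
         (cV B a j k * cV B a k i * ser_mult (f (a j - a k)) (f (a k - a i)) m z))"
proof -
  have d: "dser (Vmat B f a j i) r m z = cV B a j i * frechet_derivative (f (a j - a i) m) (at z) (axis r 1)"
    using ij fd_scale[OF der] by (simp add: dser_def Vmat_ne ser_scale_def)
  have s: "(\<Sum>k\<in>UNIV. form_multr (Amat U B f a j k) (Vmat B f a k i) r m z) -
        (\<Sum>k\<in>UNIV. form_smult (Vmat B f a j k) (Amat U B f a k i) r m z)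
     = (\<Sum>k\<in>UNIV-{i,j}. (dl (a j - a k) r z - dl (a k - a i) r z) *
         (cV B a j k * cV B a k i * ser_mult (f (a j - a k)) (f (a k - a i)) m z))"
    unfolding sum_subtractf[symmetric]
  proof (rule sum.mono_neutral_cong_right)
    show "\<forall>k\<in>UNIV - (UNIV - {i, j}). form_multr (Amat U B f a j k) (Vmat B f a k i) r m z -
          form_smult (Vmat B f a j k) (Amat U B f a k i) r m z = 0"
      by (auto simp: form_multr_def form_smult_def Amat_def Vmat_def ser_mult_def)
    fix k assume "k \<in> UNIV - {i, j}"
    then show "form_multr (Amat U B f a j k) (Vmat B f a k i) r m z -
          form_smult (Vmat B f a j k) (Amat U B f a k i) r m z =
         (dl (a j - a k) r z - dl (a k - a i) r z) *
         (cV B a j k * cV B a k i * ser_mult (f (a j - a k)) (f (a k - a i)) m z)"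
      using AV_term[of k i j z U] VA_term[of k i j z U] z by (simp add: left_diff_distrib)
  qed auto
  show ?thesis
    unfolding covD_def form_sub_def form_add_def form_sum_def using d s by simp
qed

lemma sign_id:
  assumes B: "skew_bilinear B"
    and Q: "B (a j) (a i) * B (a j - a k) (a k - a i) = B (a j) (a k) * B (a k) (a i)"
  shows "cV B a j i * (sgnpow (B (a j - a k) (a k - a i)) * of_int (B (a j - a k) (a k - a i)))
     = cV B a j k * cV B a k i"
proof -
  have b: "B (a j - a k) (a k - a i) = B (a j) (a k) - B (a j) (a i) + B (a k) (a i)"
    using bil[OF B] by simp
  have "cV B a j i * (sgnpow (B (a j - a k) (a k - a i)) * of_int (B (a j - a k) (a k - a i)))
     = sgnpow (B (a j) (a i) + B (a j - a k) (a k - a i)) * of_int (B (a j) (a i) * B (a j - a k) (a k - a i))"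
    unfolding cV_def sgnpow_add by simp
  also have "\<dots> = sgnpow (B (a j) (a k) + B (a k) (a i)) * of_int (B (a j) (a k) * B (a k) (a i))"
    using Q b by simp
  also have "\<dots> = cV B a j k * cV B a k i"
    unfolding cV_def sgnpow_add by simp
  finally show ?thesis .
qed

theorem lemma3p9:
  fixes U :: "(complex ^ 'n::finite) set"
    and B :: "('n \<Rightarrow> int) \<Rightarrow> ('n \<Rightarrow> int) \<Rightarrow> int"
    and f :: "('n \<Rightarrow> int) \<Rightarrow> ('n \<Rightarrow> nat) \<Rightarrow> complex ^ 'n \<Rightarrow> complex"
    and a :: "'n \<Rightarrow> ('n \<Rightarrow> int)"
    and i j :: 'n
    and p :: nat
  assumes B: "skew_bilinear B"
    and U: "open U" "connected U"
    and fR: "\<And>\<alpha>. \<alpha> \<noteq> 0 \<Longrightarrow> in_R U (f \<alpha>)"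
    and f_i: "\<And>\<alpha>. \<alpha> \<noteq> 0 \<Longrightarrow> in_ideal U (len \<alpha>) (f \<alpha>)"
    and f_ii: "\<And>\<alpha>. \<alpha> \<noteq> 0 \<Longrightarrow> \<not> ser_is_zero U (f \<alpha>) \<Longrightarrow> (\<forall>z\<in>U. Zc \<alpha> z \<noteq> 0)"
    and f_iii: "joyce_pde U B f"
    and indep: "lin_indep_R a"
    and ij: "i \<noteq> j"
    and p: "p \<ge> 3"
    and hyp: "len (a j - a i) \<ge> p \<or>
      ((\<forall>k. k \<noteq> i \<and> k \<noteq> j \<longrightarrow>
          B (a j) (a i) * B (a j - a k) (a k - a i) = B (a j) (a k) * B (a k) (a i)) \<and>
       (\<forall>\<beta> \<gamma>. \<beta> \<noteq> 0 \<and> \<gamma> \<noteq> 0 \<and> \<beta> + \<gamma> = a j - a i \<and>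
          \<not> (\<exists>k. k \<noteq> i \<and> k \<noteq> j \<and>
               ((\<beta> = a j - a k \<and> \<gamma> = a k - a i) \<or> (\<beta> = a k - a i \<and> \<gamma> = a j - a k)))
          \<longrightarrow> in_ideal U p (ser_scale (of_int (B \<beta> \<gamma>)) (ser_mult (f \<beta>) (f \<gamma>)))))"
  shows "form_in_ideal U p (covD U B f a j i)"
  unfolding form_in_ideal_def in_ideal_def
proof (intro allI impI ballI)
  fix r :: 'n and m :: "'n \<Rightarrow> nat" and z :: "complex^'n"
  assume m: "deg m < p" and z: "z \<in> U"
  define \<alpha> where "\<alpha> = a j - a i"
  define K where "K = (UNIV::'n set) - {i, j}"
  have nz: "\<And>k l. k \<noteq> l \<Longrightarrow> a k - a l \<noteq> 0" using indep1[OF indep] by simp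
  have a0: "\<alpha> \<noteq> 0" unfolding \<alpha>_def using nz ij by auto
  obtain L where der: "(f \<alpha> m has_derivative L) (at z)"
    using fR[OF a0] z unfolding in_R_def holo_on_def by blast
  define X where "X k = ser_mult (f (a j - a k)) (f (a k - a i)) m z" for k
  define D where "D = frechet_derivative (f \<alpha> m) (at z) (axis r 1)"
  have cf: "covD U B f a j i r m z = cV B a j i * D
    + (\<Sum>k\<in>K. (dl (a j - a k) r z - dl (a k - a i) r z) * (cV B a j k * cV B a k i * X k))"
    unfolding D_def X_def K_def using covD_formula[where U=U and B=B and f=f and a=a and r=r, OF ij z der[unfolded \<alpha>_def]] \<alpha>_def by simp
  show "covD U B f a j i r m z = 0"
  proof (cases "len (a j - a i) \<ge> p")
    case True
    have "\<forall>z\<in>U. f \<alpha> m z = 0" using f_i[OF a0] m True unfolding in_ideal_def \<alpha>_def by auto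
    then have D0: "D = 0" unfolding D_def using fd_zero[OF U(1) z, of "f \<alpha> m"] by simp
    have X0: "X k = 0" if k: "k \<in> K" for k
    proof -
      have kk: "k \<noteq> i" "k \<noteq> j" using k K_def by auto
      have "len \<alpha> \<le> len (a j - a k) + len (a k - a i)"
        using len_add[of "a j - a k" "a k - a i"] unfolding \<alpha>_def by simp
      then have "deg m < len (a j - a k) + len (a k - a i)" using m True \<alpha>_def by simp
      moreover have "in_ideal U (len (a j - a k)) (f (a j - a k))" using f_i nz kk by auto
      moreover have "in_ideal U (len (a k - a i)) (f (a k - a i))" using f_i nz kk by auto
      ultimately show ?thesis unfolding X_def using ser_mult_ideal z by blast
    qed
    show ?thesis unfolding cf D0 using X0 by simp
  next
    case False
    then have Q: "\<And>k. k \<noteq> i \<Longrightarrow> k \<noteq> j \<Longrightarrow>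
          B (a j) (a i) * B (a j - a k) (a k - a i) = B (a j) (a k) * B (a k) (a i)"
      and V: "\<And>\<beta> \<gamma>. \<beta> \<noteq> 0 \<Longrightarrow> \<gamma> \<noteq> 0 \<Longrightarrow> \<beta> + \<gamma> = a j - a i \<Longrightarrow>
          \<not> (\<exists>k. k \<noteq> i \<and> k \<noteq> j \<and>
               ((\<beta> = a j - a k \<and> \<gamma> = a k - a i) \<or> (\<beta> = a k - a i \<and> \<gamma> = a j - a k)))
          \<Longrightarrow> in_ideal U p (ser_scale (of_int (B \<beta> \<gamma>)) (ser_mult (f \<beta>) (f \<gamma>)))"
      using hyp by auto
    define T where "T \<beta> = sgnpow (B \<beta> (\<alpha> - \<beta>)) * of_int (B \<beta> (\<alpha> - \<beta>))
                 * ser_mult (ser_mult (f \<beta>) (f (\<alpha> - \<beta>))) (dlogZ \<beta> r) m z" for \<beta>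
    define S where "S = {\<beta>. \<beta> \<noteq> 0 \<and> \<alpha> - \<beta> \<noteq> 0}"
    define g1 where "g1 k = a j - a k" for k
    define g2 where "g2 k = a k - a i" for k
    define P where "P = g1 ` K \<union> g2 ` K"
    have pde: "D = - infsum T S"
      using f_iii a0 z unfolding joyce_pde_def D_def T_def S_def dser_def by blast
    have PS: "P \<subseteq> S"
      unfolding P_def S_def K_def g1_def g2_def \<alpha>_def using nz by auto
    have fP: "finite P" unfolding P_def by simp
    have Trest: "T \<beta> = 0" if "\<beta> \<in> S - P" for \<beta>
    proof -
      have nP: "\<not> (\<exists>k. k \<noteq> i \<and> k \<noteq> j \<and>
               ((\<beta> = a j - a k \<and> \<alpha> - \<beta> = a k - a i) \<or> (\<beta> = a k - a i \<and> \<alpha> - \<beta> = a j - a k)))"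
        using that unfolding P_def K_def g1_def g2_def by auto
      have "in_ideal U p (ser_scale (of_int (B \<beta> (\<alpha> - \<beta>))) (ser_mult (f \<beta>) (f (\<alpha> - \<beta>))))"
        by (rule V) (use that S_def \<alpha>_def nP in auto)
      then have "of_int (B \<beta> (\<alpha> - \<beta>)) * ser_mult (f \<beta>) (f (\<alpha> - \<beta>)) m z = 0"
        using m z unfolding in_ideal_def ser_scale_def by auto
      then show ?thesis unfolding T_def ser_mult_dlog by auto
    qed
    have inf: "infsum T S = sum T P"
    proof -
      have "infsum T S = infsum T P"
        by (rule infsum_cong_neutral) (use PS Trest in auto)
      then show ?thesis using fP by simp
    qed
    have disj: "g1 ` K \<inter> g2 ` K = {}"
      unfolding K_def g1_def g2_def using indep2[OF indep _ _ _ _ ij] by auto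
    have inj1: "inj_on g1 K" unfolding inj_on_def g1_def using indep1[OF indep] by auto
    have inj2: "inj_on g2 K" unfolding inj_on_def g2_def using indep1[OF indep] by auto
    have sumP: "sum T P = (\<Sum>k\<in>K. T (g1 k) + T (g2 k))"
      unfolding P_def sum.distrib
      by (simp add: sum.union_disjoint disj sum.reindex inj1 inj2)
    have term0: "cV B a j i * - (T (g1 k) + T (g2 k)) +
        (dl (a j - a k) r z - dl (a k - a i) r z) * (cV B a j k * cV B a k i * X k) = 0"
      if k: "k \<in> K" for k
    proof -
      have kk: "k \<noteq> i" "k \<noteq> j" using k K_def by auto
      define b where "b = B (a j - a k) (a k - a i)"
      have E: "cV B a j i * (sgnpow b * of_int b) = cV B a j k * cV B a k i"
        unfolding b_def by (rule sign_id[OF B Q[OF kk]])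
      have e1: "\<alpha> - g1 k = a k - a i" "\<alpha> - g2 k = a j - a k"
        unfolding \<alpha>_def g1_def g2_def by auto
      have anti: "B (a k - a i) (a j - a k) = - b"
      proof -
        have "\<forall>x y. B x y = - B y x" using B unfolding skew_bilinear_def by blast
        then show ?thesis unfolding b_def by blast
      qed
      have T1: "T (g1 k) = sgnpow b * of_int b * X k * dl (a j - a k) r z"
        unfolding T_def e1 ser_mult_dlog X_def dl_def b_def by (simp add: g1_def)
      have T2: "T (g2 k) = sgnpow b * of_int (- b) * X k * dl (a k - a i) r z"
        unfolding T_def e1 ser_mult_dlog X_def dl_def anti
        by (simp add: g2_def anti sgnpow_neg ser_mult_comm[of "f (a k - a i)"])
      show ?thesis unfolding T1 T2 E[symmetric] of_int_minus
        by algebra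
    qed
    have "(\<Sum>k\<in>K. cV B a j i * - (T (g1 k) + T (g2 k)) +
        (dl (a j - a k) r z - dl (a k - a i) r z) * (cV B a j k * cV B a k i * X k))
      = cV B a j i * - (\<Sum>k\<in>K. T (g1 k) + T (g2 k)) +
        (\<Sum>k\<in>K. (dl (a j - a k) r z - dl (a k - a i) r z) * (cV B a j k * cV B a k i * X k))"
      by (simp only: sum.distrib sum_distrib_left[symmetric] sum_negf)
    moreover have "(\<Sum>k\<in>K. cV B a j i * - (T (g1 k) + T (g2 k)) +
        (dl (a j - a k) r z - dl (a k - a i) r z) * (cV B a j k * cV B a k i * X k)) = 0"
      using term0 by (rule sum.neutral[OF ballI])
    ultimately show ?thesis unfolding cf pde inf sumP by simp
  qed
qed

end
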